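(* For every $n\ge 3$, the sensitivity to synchronism of elementary cellular automaton rule $162$ satisfies $\mu(f_{162,n})=\dfrac{3^n-2^{n+1}-n+2}{3^n-2^{n+1}+2}$.
   Context: Cells are indexed by $\mathbb{Z}_n=\{0,\dots,n-1\}$, indices modulo $n$. Rule $162$ has local rule $r_{162}(x_1,x_2,x_3)=(x_1\vee\neg x_2)\wedge x_3$ and global function $f_{162,n}(x)_i=r_{162}(x_{i-1},x_i,x_{i+1})$. An update schedule is an ordered partition $\Delta=(\Delta_1,\dots,\Delta_k)$ of $\mathbb{Z}_n$ into nonempty blocks; $\mathcal{P}_n$ is the set of them. For a block $B$ let $f^{(B)}(x)_i=f_{162,n}(x)_i$ if $i\in B$ and $x_i$ otherwise; $f^{(\Delta)}_{162,n}=f^{(\Delta_k)}\circ\cdots\circ f^{(\Delta_1)}$. The dynamics of $\Delta$ is the transition digraph with arcs $(x,f^{(\Delta)}_{162,n}(x))$; $\mathcal{D}(f_{162,n})$ is the set of distinct dynamics over $\Delta\in\mathcal{P}_n$. The sensitivity to synchronism is $\mu(f_{162,n})=|\mathcal{D}(f_{162,n})|/(3^n-2^{n+1}+2)$. *)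

theory Defs
  imports Complex_Main
begin

definition r162 :: "bool \<Rightarrow> bool \<Rightarrow> bool \<Rightarrow> bool" where
  "r162 x1 x2 x3 = ((x1 \<or> \<not> x2) \<and> x3)"

text \<open>Configurations of size n: functions on nat, with cells {0..<n}; values outside are False.\<close>
definition configs :: "nat \<Rightarrow> (nat \<Rightarrow> bool) set" where
  "configs n = {x. \<forall>i\<ge>n. \<not> x i}"

definition f162 :: "nat \<Rightarrow> (nat \<Rightarrow> bool) \<Rightarrow> (nat \<Rightarrow> bool)" where
  "f162 n x = (\<lambda>i. if i < n then r162 (x ((i + n - 1) mod n)) (x i) (x ((i + 1) mod n)) else False)"

definition block_update :: "nat \<Rightarrow> nat set \<Rightarrow> (nat \<Rightarrow> bool) \<Rightarrow> (nat \<Rightarrow> bool)" where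
  "block_update n B x = (\<lambda>i. if i \<in> B then f162 n x i else x i)"

definition schedules :: "nat \<Rightarrow> nat set list set" where
  "schedules n = {\<Delta>. (\<forall>B\<in>set \<Delta>. B \<noteq> {}) \<and>
      (\<forall>i j. i < j \<and> j < length \<Delta> \<longrightarrow> \<Delta> ! i \<inter> \<Delta> ! j = {}) \<and>
      \<Union> (set \<Delta>) = {0..<n}}"

text \<open>f^(Delta) = f^(Delta_k) o ... o f^(Delta_1): Delta_1 is applied first.\<close>
definition sched_update :: "nat \<Rightarrow> nat set list \<Rightarrow> (nat \<Rightarrow> bool) \<Rightarrow> (nat \<Rightarrow> bool)" where
  "sched_update n \<Delta> x = foldl (\<lambda>y B. block_update n B y) x \<Delta>"

text \<open>Dynamics: the transition digraph, as its set of arcs over the configuration space.\<close>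
definition dynamics :: "nat \<Rightarrow> nat set list \<Rightarrow> ((nat \<Rightarrow> bool) \<times> (nat \<Rightarrow> bool)) set" where
  "dynamics n \<Delta> = {(x, sched_update n \<Delta> x) | x. x \<in> configs n}"

definition all_dynamics :: "nat \<Rightarrow> ((nat \<Rightarrow> bool) \<times> (nat \<Rightarrow> bool)) set set" where
  "all_dynamics n = dynamics n ` schedules n"

definition sensitivity :: "nat \<Rightarrow> real" where
  "sensitivity n = real (card (all_dynamics n)) / (3 ^ n - 2 ^ (n + 1) + 2)"

end

theory Submission
  imports Defs "HOL-Library.FuncSet"
begin

definition nx :: "nat \<Rightarrow> nat \<Rightarrow> nat" where "nx n i = (i + 1) mod n"
definition pv :: "nat \<Rightarrow> nat \<Rightarrow> nat" where "pv n i = (i + n - 1) mod n"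
definition pos :: "nat set list \<Rightarrow> nat \<Rightarrow> nat" where
  "pos D i = (THE k. k < length D \<and> i \<in> D ! k)"

datatype lbl = LT | EQ | GT

definition cmp :: "nat \<Rightarrow> nat \<Rightarrow> lbl" where
  "cmp a b = (if a < b then LT else if a = b then EQ else GT)"

definition lab :: "nat \<Rightarrow> nat set list \<Rightarrow> nat \<Rightarrow> lbl" where
  "lab n D = restrict (\<lambda>i. cmp (pos D i) (pos D (nx n i))) {0..<n}"

definition sol :: "nat \<Rightarrow> (nat \<Rightarrow> lbl) \<Rightarrow> (nat \<Rightarrow> bool) \<Rightarrow> (nat \<Rightarrow> bool) \<Rightarrow> bool" where
  "sol n L x F = (\<forall>i<n. F i = r162 (if L (pv n i) = LT then F (pv n i) else x (pv n i)) (x i)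
        (if L i = GT then F (nx n i) else x (nx n i)))"

lemma nx_lt: "0 < n \<Longrightarrow> nx n i < n" by (simp add: nx_def)
lemma pv_lt: "0 < n \<Longrightarrow> pv n i < n" by (simp add: pv_def)
lemma pv_eq: "i < n \<Longrightarrow> pv n i = (if i = 0 then n - 1 else i - 1)"
proof -
  assume a: "i < n"
  show ?thesis
  proof (cases "i = 0")
    case True then show ?thesis using a by (simp add: pv_def)
  next
    case False
    then have "i + n - 1 = (i - 1) + n" using a by simp
    then have "(i + n - 1) mod n = (i - 1) mod n" by (metis mod_add_self2)
    then show ?thesis using False a by (simp add: pv_def)
  qed
qed
lemma nx_eq: "i < n \<Longrightarrow> nx n i = (if i = n - 1 then 0 else i + 1)"
  by (auto simp: nx_def)
lemma nx_pv: "i < n \<Longrightarrow> nx n (pv n i) = i"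
  using pv_eq nx_eq by auto
lemma pv_nx: "i < n \<Longrightarrow> pv n (nx n i) = i"
  using pv_eq nx_eq by auto
lemma nx_neq: "2 \<le> n \<Longrightarrow> i < n \<Longrightarrow> nx n i \<noteq> i"
  using nx_eq by auto
lemma pv_neq: "2 \<le> n \<Longrightarrow> i < n \<Longrightarrow> pv n i \<noteq> i"
  using pv_eq by auto


lemma sched_disj:
  assumes D: "D \<in> schedules n" and "k < length D" "k' < length D" "i \<in> D ! k" "i \<in> D ! k'"
  shows "k = k'"
proof (rule ccontr)
  assume ne: "k \<noteq> k'"
  have disj: "\<forall>i j. i < j \<and> j < length D \<longrightarrow> D ! i \<inter> D ! j = {}" using D by (simp add: schedules_def)
  show False
  proof (cases "k < k'")
    case True
    then have "D ! k \<inter> D ! k' = {}" using disj assms(3) by simp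
    then show False using assms(4,5) by auto
  next
    case False
    then have "k' < k" using ne by simp
    then have "D ! k' \<inter> D ! k = {}" using disj assms(2) by simp
    then show False using assms(4,5) by auto
  qed
qed

lemma sched_pos:
  assumes D: "D \<in> schedules n" and i: "i < n"
  shows "pos D i < length D \<and> i \<in> D ! pos D i"
proof -
  have "\<Union> (set D) = {0..<n}" using D by (simp add: schedules_def)
  then have "i \<in> \<Union> (set D)" using i by simp
  then obtain k where k: "k < length D" "i \<in> D ! k" by (auto simp: in_set_conv_nth)
  have "pos D i = k" unfolding pos_def
  proof (rule the_equality)
    show "k < length D \<and> i \<in> D ! k" using k by simp
    show "\<And>k'. k' < length D \<and> i \<in> D ! k' \<Longrightarrow> k' = k" using sched_disj[OF D] k by blast
  qed
  then show ?thesis using k by simp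
qed

lemma sched_pos_eq:
  assumes D: "D \<in> schedules n" and k: "k < length D" "i \<in> D ! k"
  shows "pos D i = k"
proof -
  have "i \<in> \<Union> (set D)" using k by auto
  moreover have "\<Union> (set D) = {0..<n}" using D by (simp add: schedules_def)
  ultimately have i: "i < n" by auto
  have p: "pos D i < length D" "i \<in> D ! pos D i" using sched_pos[OF D i] by auto
  show ?thesis using sched_disj[OF D p(1) k(1) p(2) k(2)] .
qed

lemma sched_sub:
  assumes D: "D \<in> schedules n" and k: "k < length D" and j: "j \<in> D ! k"
  shows "j < n"
proof -
  have "j \<in> \<Union> (set D)" using k j by auto
  moreover have "\<Union> (set D) = {0..<n}" using D by (simp add: schedules_def)
  ultimately show ?thesis by auto
qed

definition st :: "nat \<Rightarrow> nat set list \<Rightarrow> (nat \<Rightarrow> bool) \<Rightarrow> nat \<Rightarrow> nat \<Rightarrow> bool" where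
  "st n D x k = foldl (\<lambda>y B. block_update n B y) x (take k D)"

lemma st_Suc: "k < length D \<Longrightarrow> st n D x (Suc k) = block_update n (D ! k) (st n D x k)"
  by (simp add: st_def take_Suc_conv_app_nth)

lemma st_inv:
  assumes D: "D \<in> schedules n" and k: "k \<le> length D"
  shows "st n D x k j = (if j < n \<and> pos D j < k then st n D x (Suc (pos D j)) j else x j)"
  using k
proof (induction k)
  case 0
  then show ?case by (simp add: st_def)
next
  case (Suc k)
  then have kl: "k < length D" by simp
  show ?case
  proof (cases "j \<in> D ! k")
    case True
    then have "pos D j = k" using sched_pos_eq[OF D kl] by simp
    moreover have "j < n" using sched_sub[OF D kl True] .
    ultimately show ?thesis by simp
  next
    case False
    then have e: "st n D x (Suc k) j = st n D x k j" using st_Suc[OF kl] by (simp add: block_update_def)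
    have "j < n \<Longrightarrow> pos D j \<noteq> k" using sched_pos[OF D, of j] False by auto
    then show ?thesis using e Suc by auto
  qed
qed

lemma su_st: "sched_update n D x = st n D x (length D)"
  by (simp add: sched_update_def st_def)

lemma su_eq:
  assumes D: "D \<in> schedules n" and j: "j < n"
  shows "sched_update n D x j = r162
     (if pos D (pv n j) < pos D j then sched_update n D x (pv n j) else x (pv n j)) (x j)
     (if pos D (nx n j) < pos D j then sched_update n D x (nx n j) else x (nx n j))"
proof -
  have n0: "0 < n" using j by simp
  let ?F = "sched_update n D x"
  let ?p = "pos D j"
  have pj: "?p < length D" "j \<in> D ! ?p" using sched_pos[OF D j] by auto
  have F: "?F m = st n D x (Suc (pos D m)) m" if "m < n" for m
    using st_inv[OF D order_refl, of x m] sched_pos[OF D that] that by (simp add: su_st)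
  have s: "st n D x ?p m = (if pos D m < ?p then ?F m else x m)" if "m < n" for m
    using st_inv[OF D, of ?p x m] pj(1) F[OF that] that by simp
  have "?F j = f162 n (st n D x ?p) j" using F[OF j] st_Suc[OF pj(1)] pj(2) by (simp add: block_update_def)
  also have "\<dots> = r162 (st n D x ?p (pv n j)) (st n D x ?p j) (st n D x ?p (nx n j))"
    using j by (simp add: f162_def pv_def nx_def)
  finally show ?thesis using s[OF j] s[OF pv_lt[OF n0]] s[OF nx_lt[OF n0]] by simp
qed

lemma lab_LT_pv:
  assumes "i < n" shows "(lab n D (pv n i) = LT) = (pos D (pv n i) < pos D i)"
  using assms pv_lt[of n i] nx_pv[OF assms] by (simp add: lab_def cmp_def)

lemma lab_GT:
  assumes "i < n" shows "(lab n D i = GT) = (pos D (nx n i) < pos D i)"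
  using assms by (auto simp add: lab_def cmp_def)

lemma su_sol:
  assumes D: "D \<in> schedules n"
  shows "sol n (lab n D) x (sched_update n D x)"
  unfolding sol_def using su_eq[OF D] lab_LT_pv lab_GT by simp

lemma sol_unique:
  assumes D: "D \<in> schedules n" and G: "sol n (lab n D) x G" and F: "sol n (lab n D) x F"
  shows "i < n \<Longrightarrow> G i = F i"
proof (induction "pos D i" arbitrary: i rule: less_induct)
  case less
  have n0: "0 < n" using less by simp
  have a: "(if lab n D (pv n i) = LT then G (pv n i) else x (pv n i)) =
        (if lab n D (pv n i) = LT then F (pv n i) else x (pv n i))"
    using less(1)[of "pv n i"] lab_LT_pv[OF less(2)] pv_lt[OF n0] by auto
  have c: "(if lab n D i = GT then G (nx n i) else x (nx n i)) =
        (if lab n D i = GT then F (nx n i) else x (nx n i))"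
    using less(1)[of "nx n i"] lab_GT[OF less(2)] nx_lt[OF n0] by auto
  have "G i = r162 (if lab n D (pv n i) = LT then G (pv n i) else x (pv n i)) (x i)
        (if lab n D i = GT then G (nx n i) else x (nx n i))" using G less(2) unfolding sol_def by blast
  moreover have "F i = r162 (if lab n D (pv n i) = LT then F (pv n i) else x (pv n i)) (x i)
        (if lab n D i = GT then F (nx n i) else x (nx n i))" using F less(2) unfolding sol_def by blast
  ultimately show ?case using a c by simp
qed

lemma su_configs: "D \<in> schedules n \<Longrightarrow> x \<in> configs n \<Longrightarrow> sched_update n D x \<in> configs n"
proof -
  assume D: "D \<in> schedules n" and x: "x \<in> configs n"
  have "st n D x k j = x j" if "j \<ge> n" "k \<le> length D" for j k
    using st_inv[OF D that(2), of x j] that by simp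
  then show ?thesis using x by (simp add: su_st configs_def)
qed

lemma dyn_eq_iff:
  "(dynamics n D1 = dynamics n D2) = (\<forall>x\<in>configs n. sched_update n D1 x = sched_update n D2 x)"
  unfolding dynamics_def by (auto simp: set_eq_iff)


lemma lab_eq_dyn:
  assumes D1: "D1 \<in> schedules n" and D2: "D2 \<in> schedules n" and L: "lab n D1 = lab n D2"
  shows "dynamics n D1 = dynamics n D2"
  unfolding dyn_eq_iff
proof
  fix x assume x: "x \<in> configs n"
  have s1: "sol n (lab n D2) x (sched_update n D1 x)" using su_sol[OF D1] L by simp
  have lt: "sched_update n D1 x i = sched_update n D2 x i" if "i < n" for i
    using sol_unique[OF D2 s1 su_sol[OF D2] that] .
  have ge: "sched_update n D1 x i = sched_update n D2 x i" if "\<not> i < n" for i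
    using su_configs[OF D1 x] su_configs[OF D2 x] that by (simp add: configs_def)
  show "sched_update n D1 x = sched_update n D2 x"
  proof (rule ext)
    fix j show "sched_update n D1 x j = sched_update n D2 x j"
      using lt ge by (cases "j < n") simp_all
  qed
qed

lemma idx_nx: "0 < n \<Longrightarrow> nx n ((i + k) mod n) = (i + Suc k) mod n"
  by (simp add: nx_def mod_Suc_eq)
lemma idx_pv: "0 < n \<Longrightarrow> pv n ((i + Suc k) mod n) = (i + k) mod n"
  by (metis idx_nx pv_nx mod_less_divisor)
lemma idx_n1: "i < n \<Longrightarrow> (i + (n - 1)) mod n = pv n i"
  by (simp add: pv_def)
lemma idx_1: "(i + 1) mod n = nx n i" by (simp add: nx_def)
lemma idx_neq: fixes i k n :: nat shows "i < n \<Longrightarrow> 0 < k \<Longrightarrow> k < n \<Longrightarrow> (i + k) mod n \<noteq> i"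
proof
  assume a: "i < n" "0 < k" "k < n" "(i + k) mod n = i"
  show False
  proof (cases "i + k < n")
    case True
    then have "(i + k) mod n = i + k" by simp
    then show False using a by simp
  next
    case False
    then have e: "i + k = (i + k - n) + n" by simp
    have "i + k - n < n" using a by simp
    then have "(i + k) mod n = i + k - n" using e by (metis mod_add_self2 mod_less)
    then show False using a False by simp
  qed
qed
lemma idx_inj: fixes i k k' n :: nat shows "i < n \<Longrightarrow> k < n \<Longrightarrow> k' < n \<Longrightarrow> (i + k) mod n = (i + k') mod n \<Longrightarrow> k = k'"
proof (rule ccontr)
  assume a: "i < n" "k < n" "k' < n" "(i + k) mod n = (i + k') mod n" "k \<noteq> k'"
  { fix p q :: nat assume ab: "p < q" "q < n" "(i + p) mod n = (i + q) mod n"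
    have "((i + p) mod n + (q - p)) mod n = (i + p + (q - p)) mod n"
      by (simp add: mod_add_left_eq)
    also have "i + p + (q - p) = i + q" using ab by simp
    finally have "((i + p) mod n + (q - p)) mod n = (i + q) mod n" .
    then have "((i + p) mod n + (q - p)) mod n = (i + p) mod n" using ab by simp
    moreover have lt: "(i + p) mod n < n" using ab by simp
    moreover have "((i + p) mod n + (q - p)) mod n \<noteq> (i + p) mod n"
      by (rule idx_neq[OF lt]) (use ab in auto)
    ultimately have False by simp }
  then show False using a by (metis linorder_neqE_nat)
qed

definition Lc :: "nat \<Rightarrow> nat \<Rightarrow> lbl \<Rightarrow> nat \<Rightarrow> lbl" where
  "Lc n i v = restrict (\<lambda>j. if j = pv n i then LT else if j = i then v else GT) {0..<n}"

lemma r162_imp: "r162 a b c \<Longrightarrow> c" by (simp add: r162_def)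

lemma sol_eq: "sol n L x F \<Longrightarrow> m < n \<Longrightarrow> F m = r162 (if L (pv n m) = LT then F (pv n m) else x (pv n m)) (x m)
        (if L m = GT then F (nx n m) else x (nx n m))"
  by (simp add: sol_def)

lemma collision_sol:
  assumes n3: "3 \<le> n" and i: "i < n" and S: "sol n (Lc n i LT) x F"
  shows "sol n (Lc n i EQ) x F"
proof -
  let ?L = "Lc n i LT"
  have n0: "0 < n" using n3 by simp
  let ?j = "\<lambda>k. (i + k) mod n"
  define c where "c = (\<lambda>m. if ?L m = GT then F (nx n m) else x (nx n m))"
  have jlt: "?j k < n" for k using n0 by simp
  have LGT: "?L (?j k) = GT" if "1 \<le> k" "k \<le> n - 2" for k
  proof -
    have "?j k \<noteq> i" using idx_neq[OF i, of k] that n3 by simp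
    moreover have "?j k \<noteq> pv n i"
    proof
      assume "?j k = pv n i"
      then have "?j k = ?j (n - 1)" using idx_n1[OF i] by simp
      then have "k = n - 1" using idx_inj[OF i, of k "n - 1"] that n3 by simp
      then show False using that n3 by simp
    qed
    ultimately show ?thesis using jlt by (simp add: Lc_def)
  qed
  have Lpv: "?L (pv n i) = LT" using pv_lt[OF n0] by (simp add: Lc_def)
  have Li: "?L i = LT" using i pv_neq[of n i] n3 by (simp add: Lc_def)
  have Fc: "F m \<Longrightarrow> c m" if "m < n" for m using sol_eq[OF S that] r162_imp unfolding c_def by metis
  have chain: "c (?j k) \<longrightarrow> F (pv n i) \<and> x i" if "k + d = n - 2" "1 \<le> k" for d k
    using that
  proof (induction d arbitrary: k)
    case 0
    then have k: "k = n - 2" by simp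
    have e: "nx n (?j (n - 2)) = pv n i" using idx_nx[OF n0, of i "n - 2"] idx_n1[OF i] n3
      by (simp add: Suc_diff_Suc numeral_2_eq_2)
    have "c (?j (n - 2)) = F (pv n i)" using LGT[of "n - 2"] n3 e by (simp add: c_def)
    moreover have "F (pv n i) \<longrightarrow> x i" using Fc[OF pv_lt[OF n0, of i]] Lpv nx_pv[OF i] by (simp add: c_def)
    ultimately show ?case using k by simp
  next
    case (Suc d)
    have IH: "c (?j (Suc k)) \<longrightarrow> F (pv n i) \<and> x i" using Suc.IH[of "Suc k"] Suc.prems by simp
    have "c (?j k) = F (?j (Suc k))" using LGT[of k] Suc.prems idx_nx[OF n0, of i k] by (simp add: c_def)
    then show ?case using Fc[OF jlt, of "Suc k"] IH by auto
  qed
  have cn: "c (nx n i) \<longrightarrow> F (pv n i) \<and> x i" using chain[of 1 "n - 3"] n3 idx_1[of i n] by simp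
  have Fi: "F i = r162 (F (pv n i)) (x i) (x (nx n i))" using sol_eq[OF S i] Lpv Li by simp
  have Fn: "F (nx n i) = r162 (F i) (x (nx n i)) (c (nx n i))"
    using sol_eq[OF S nx_lt[OF n0]] pv_nx[OF i] Li by (simp add: c_def)
  show ?thesis unfolding sol_def
  proof (intro allI impI)
    fix m assume m: "m < n"
    show "F m = r162 (if Lc n i EQ (pv n m) = LT then F (pv n m) else x (pv n m)) (x m)
        (if Lc n i EQ m = GT then F (nx n m) else x (nx n m))"
    proof (cases "m = nx n i")
      case True
      have "pv n i \<noteq> i" using pv_neq[of n i] n3 i by simp
      then have "Lc n i EQ (pv n m) = EQ" using True pv_nx[OF i] i by (simp add: Lc_def)
      moreover have "(Lc n i EQ m = GT) = (?L m = GT)" using True nx_neq[of n i] n3 i by (simp add: Lc_def)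
      ultimately show ?thesis using Fn Fi cn True pv_nx[OF i] by (auto simp: r162_def c_def)
    next
      case False
      have "pv n m \<noteq> i" using False nx_pv[OF m] by metis
      then have "(Lc n i EQ (pv n m) = LT) = (?L (pv n m) = LT)" by (simp add: Lc_def)
      moreover have "(Lc n i EQ m = GT) = (?L m = GT)" by (simp add: Lc_def)
      ultimately show ?thesis using sol_eq[OF S m] by simp
    qed
  qed
qed

lemma collision_dyn:
  assumes n3: "3 \<le> n" and i: "i < n" and D1: "D1 \<in> schedules n" and D2: "D2 \<in> schedules n"
    and L1: "lab n D1 = Lc n i LT" and L2: "lab n D2 = Lc n i EQ"
  shows "dynamics n D1 = dynamics n D2"
  unfolding dyn_eq_iff
proof
  fix x assume x: "x \<in> configs n"
  have s1: "sol n (lab n D2) x (sched_update n D1 x)"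
    using collision_sol[OF n3 i] su_sol[OF D1, of x] L1 L2 by simp
  have lt: "sched_update n D1 x i = sched_update n D2 x i" if "i < n" for i
    using sol_unique[OF D2 s1 su_sol[OF D2] that] .
  have ge: "sched_update n D1 x i = sched_update n D2 x i" if "\<not> i < n" for i
    using su_configs[OF D1 x] su_configs[OF D2 x] that by (simp add: configs_def)
  show "sched_update n D1 x = sched_update n D2 x"
  proof (rule ext)
    fix j show "sched_update n D1 x j = sched_update n D2 x j"
      using lt ge by (cases "j < n") simp_all
  qed
qed


definition xc :: "nat \<Rightarrow> nat \<Rightarrow> nat \<Rightarrow> bool" where
  "xc n i = (\<lambda>j. j < n \<and> j \<noteq> i)"

lemma xc_configs: "xc n i \<in> configs n" by (simp add: xc_def configs_def)

lemma distA:
  assumes n2: "2 \<le> n" and i: "i < n" and S1: "sol n L1 (xc n i) F1" and S2: "sol n L2 (xc n i) F2"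
    and L1: "L1 i = GT" and L2: "L2 i \<noteq> GT"
  shows "F1 i \<noteq> F2 i"
proof -
  have n0: "0 < n" using n2 by simp
  have ni: "nx n i \<noteq> i" "nx n i < n" using nx_neq[OF n2 i] nx_lt[OF n0] by auto
  have "F1 (nx n i) = False" using sol_eq[OF S1 ni(2)] pv_nx[OF i] L1 ni by (simp add: xc_def r162_def)
  then have "F1 i = False" using sol_eq[OF S1 i] L1 by (simp add: xc_def r162_def)
  moreover have "F2 i = True" using sol_eq[OF S2 i] L2 ni by (simp add: xc_def r162_def)
  ultimately show ?thesis by simp
qed

lemma distB:
  assumes n3: "3 \<le> n" and i: "i < n" and S1: "sol n La (xc n i) Fa" and S2: "sol n Lb (xc n i) Fb"
    and La: "La i = LT" and Lb: "Lb i = EQ"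
    and H: "La (pv n i) = GT \<or> (\<exists>k. 1 \<le> k \<and> k \<le> n - 2 \<and> La ((i + k) mod n) \<noteq> GT)"
  shows "Fa (nx n i) \<noteq> Fb (nx n i)"
proof -
  have n0: "0 < n" and n2: "2 \<le> n" using n3 by auto
  let ?x = "xc n i"
  let ?j = "\<lambda>k. (i + k) mod n"
  define c where "c = (\<lambda>m. if La m = GT then Fa (nx n m) else ?x (nx n m))"
  have ni: "nx n i \<noteq> i" "nx n i < n" using nx_neq[OF n2 i] nx_lt[OF n0] by auto
  have jlt: "?j k < n" for k using n0 by simp
  have xj: "?x (?j k)" if "1 \<le> k" "k \<le> n - 1" for k
    using idx_neq[OF i, of k] that n3 jlt by (simp add: xc_def)
  have Fai: "Fa i = True" using sol_eq[OF S1 i] La ni by (simp add: xc_def r162_def)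
  have Fan: "Fa (nx n i) = c (nx n i)" using sol_eq[OF S1 ni(2)] pv_nx[OF i] La Fai ni
    by (simp add: xc_def r162_def c_def)
  have Fbn: "Fb (nx n i) = False" using sol_eq[OF S2 ni(2)] pv_nx[OF i] Lb ni
    by (simp add: xc_def r162_def)
  have chain: "c (?j k)" if "k + d = n - 1" "1 \<le> k"
    "(\<exists>l. k \<le> l \<and> l \<le> n - 2 \<and> La (?j l) \<noteq> GT) \<or> La (pv n i) = GT" for d k
    using that
  proof (induction d arbitrary: k)
    case 0
    then have k: "k = n - 1" by simp
    then have "La (pv n i) = GT" using 0 n3 by auto
    moreover have "?j k = pv n i" using k idx_n1[OF i] by simp
    ultimately show ?case using Fai nx_pv[OF i] by (simp add: c_def)
  next
    case (Suc d)
    have kk: "k \<le> n - 2" using Suc.prems by simp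
    have nxj: "nx n (?j k) = ?j (Suc k)" using idx_nx[OF n0] .
    show ?case
    proof (cases "La (?j k) = GT")
      case False
      then show ?thesis using xj[of "Suc k"] kk nxj n3 by (simp add: c_def)
    next
      case True
      have H': "(\<exists>l. Suc k \<le> l \<and> l \<le> n - 2 \<and> La (?j l) \<noteq> GT) \<or> La (pv n i) = GT"
        using Suc.prems(3) True by (metis Suc_leI le_neq_implies_less)
      have IH: "c (?j (Suc k))" using Suc.IH[of "Suc k"] Suc.prems H' by simp
      have pj: "pv n (?j (Suc k)) = ?j k" using idx_pv[OF n0] .
      have "Fa (?j (Suc k)) = c (?j (Suc k))"
        using sol_eq[OF S1 jlt[of "Suc k"]] pj True xj[of k] xj[of "Suc k"] Suc.prems kk n3
        by (simp add: r162_def c_def)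
      then show ?thesis using True IH nxj by (simp add: c_def)
    qed
  qed
  have "c (?j 1)"
    apply (rule chain[of 1 "n - 2"])
    using n3 H by auto
  then have "Fa (nx n i) = True" using Fan idx_1[of i n] by simp
  then show ?thesis using Fbn by simp
qed


lemma chain_le:
  fixes g :: "nat \<Rightarrow> nat"
  assumes "\<forall>j<n. g (nx n j) \<le> g j" "i < n"
  shows "g ((i + k) mod n) \<le> g i"
proof (induction k)
  case 0 then show ?case using assms(2) by simp
next
  case (Suc k)
  have n0: "0 < n" using assms(2) by simp
  have "g ((i + Suc k) mod n) \<le> g ((i + k) mod n)"
    using assms(1) idx_nx[OF n0, of i k] n0 by (metis mod_less_divisor)
  then show ?case using Suc by simp
qed

lemma chain_ge:
  fixes g :: "nat \<Rightarrow> nat"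
  assumes "\<forall>j<n. g j \<le> g (nx n j)" "i < n"
  shows "g i \<le> g ((i + k) mod n)"
proof (induction k)
  case 0 then show ?case using assms(2) by simp
next
  case (Suc k)
  have n0: "0 < n" using assms(2) by simp
  have "g ((i + k) mod n) \<le> g ((i + Suc k) mod n)"
    using assms(1) idx_nx[OF n0, of i k] n0 by (metis mod_less_divisor)
  then show ?case using Suc by simp
qed

lemma nx_back: "i < n \<Longrightarrow> (nx n i + (n - 1)) mod n = i"
  by (metis idx_n1 pv_nx nx_lt gr_zeroI less_nat_zero_code)

lemma noLT:
  assumes D: "D \<in> schedules n" and H: "\<forall>i<n. lab n D i \<noteq> LT" and i: "i < n"
  shows "lab n D i = EQ"
proof -
  have n0: "0 < n" using i by simp
  have "\<forall>j<n. \<not> pos D j < pos D (nx n j)"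
    using H by (auto simp: lab_def cmp_def split: if_splits)
  then have le: "\<forall>j<n. pos D (nx n j) \<le> pos D j" by (simp add: not_less)
  have "pos D ((nx n i + (n - 1)) mod n) \<le> pos D (nx n i)"
    by (rule chain_le[OF le nx_lt[OF n0]])
  then have "pos D i \<le> pos D (nx n i)" using nx_back[OF i] by simp
  then show ?thesis using le i H by (auto simp: lab_def cmp_def)
qed

lemma noGT:
  assumes D: "D \<in> schedules n" and H: "\<forall>i<n. lab n D i \<noteq> GT" and i: "i < n"
  shows "lab n D i = EQ"
proof -
  have n0: "0 < n" using i by simp
  have le: "\<forall>j<n. pos D j \<le> pos D (nx n j)"
    using H by (auto simp: lab_def cmp_def split: if_splits)
  have "pos D (nx n i) \<le> pos D ((nx n i + (n - 1)) mod n)"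
    by (rule chain_ge[OF le nx_lt[OF n0]])
  then have "pos D (nx n i) \<le> pos D i" using nx_back[OF i] by simp
  then show ?thesis using le i H by (auto simp: lab_def cmp_def)
qed

lemma idx_surj:
  fixes i j n :: nat
  assumes "i < n" "j < n" shows "\<exists>k<n. (i + k) mod n = j"
proof (cases "i \<le> j")
  case True
  then show ?thesis using assms by (intro exI[of _ "j - i"]) auto
next
  case False
  have "i + (j + n - i) = j + n" using assms by simp
  then have "(i + (j + n - i)) mod n = (j + n) mod n" by simp
  then show ?thesis using assms False by (intro exI[of _ "j + n - i"]) auto
qed

lemma cover:
  assumes n3: "3 \<le> n" and i: "i < n" and j: "j < n"
  shows "j = i \<or> j = pv n i \<or> (\<exists>k. 1 \<le> k \<and> k \<le> n - 2 \<and> j = (i + k) mod n)"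
proof -
  obtain k where k: "k < n" "(i + k) mod n = j" using idx_surj[OF i j] by blast
  consider "k = 0" | "k = n - 1" | "1 \<le> k \<and> k \<le> n - 2" using k n3 by linarith
  then show ?thesis
  proof cases
    case 1 then show ?thesis using k i by simp
  next
    case 2 then show ?thesis using k idx_n1[OF i] by simp
  next
    case 3 then show ?thesis using k by blast
  qed
qed

lemma mid_ne:
  assumes n3: "3 \<le> n" and i: "i < n" and k: "1 \<le> k" "k \<le> n - 2"
  shows "(i + k) mod n \<noteq> i" "(i + k) mod n \<noteq> pv n i"
proof -
  show "(i + k) mod n \<noteq> i" using idx_neq[OF i, of k] k n3 by simp
  show "(i + k) mod n \<noteq> pv n i"
  proof
    assume "(i + k) mod n = pv n i"
    then have "(i + k) mod n = (i + (n - 1)) mod n" using idx_n1[OF i] by simp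
    then have "k = n - 1" using idx_inj[OF i, of k "n - 1"] k n3 by simp
    then show False using k n3 by simp
  qed
qed

lemma Lc_char:
  assumes n3: "3 \<le> n" and i: "i < n" and E: "L \<in> extensional {0..<n}"
    and Li: "L i = v" and Lp: "L (pv n i) = LT"
    and Lm: "\<forall>k. 1 \<le> k \<and> k \<le> n - 2 \<longrightarrow> L ((i + k) mod n) = GT"
  shows "L = Lc n i v"
proof (rule ext)
  fix j
  show "L j = Lc n i v j"
  proof (cases "j < n")
    case False
    then show ?thesis using E by (simp add: Lc_def extensional_def)
  next
    case True
    have pi: "pv n i \<noteq> i" using pv_neq[of n i] n3 i by simp
    from cover[OF n3 i True] show ?thesis
    proof (elim disjE exE conjE)
      assume "j = i" then show ?thesis using Li pi True by (simp add: Lc_def)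
    next
      assume "j = pv n i" then show ?thesis using Lp pi True by (simp add: Lc_def)
    next
      fix k assume k: "1 \<le> k" "k \<le> n - 2" "j = (i + k) mod n"
      then show ?thesis using Lm mid_ne[OF n3 i k(1,2)] True by (simp add: Lc_def)
    qed
  qed
qed

lemma lab_ext: "lab n D \<in> extensional {0..<n}" by (simp add: lab_def)


lemma distB_sched:
  assumes n3: "3 \<le> n" and i: "i < n" and D1: "D1 \<in> schedules n" and D2: "D2 \<in> schedules n"
    and L1: "lab n D1 i = LT" and L2: "lab n D2 i = EQ"
    and G: "\<forall>j<n. (lab n D1 j = GT) = (lab n D2 j = GT)"
    and NC: "\<not> (lab n D1 = Lc n i LT \<and> lab n D2 = Lc n i EQ)"
  shows "\<exists>x\<in>configs n. sched_update n D1 x \<noteq> sched_update n D2 x"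
proof -
  have n0: "0 < n" using n3 by simp
  have pvl: "pv n i < n" using pv_lt[OF n0] .
  show ?thesis
  proof (cases "lab n D1 (pv n i) = GT \<or> (\<exists>k. 1 \<le> k \<and> k \<le> n - 2 \<and> lab n D1 ((i + k) mod n) \<noteq> GT)")
    case True
    have "sched_update n D1 (xc n i) (nx n i) \<noteq> sched_update n D2 (xc n i) (nx n i)"
      by (rule distB[OF n3 i su_sol[OF D1] su_sol[OF D2] L1 L2 True])
    then show ?thesis using xc_configs by metis
  next
    case False
    then have p1: "lab n D1 (pv n i) \<noteq> GT" and m1: "\<forall>k. 1 \<le> k \<and> k \<le> n - 2 \<longrightarrow> lab n D1 ((i + k) mod n) = GT"
      by auto
    have m2: "\<forall>k. 1 \<le> k \<and> k \<le> n - 2 \<longrightarrow> lab n D2 ((i + k) mod n) = GT"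
      using m1 G n0 by simp
    have p2: "lab n D2 (pv n i) \<noteq> GT" using p1 G pvl by simp
    have m2': "lab n D2 ((i + 1) mod n) = GT" using m2[rule_format, of 1] n3 by simp
    show ?thesis
    proof (cases "lab n D2 (pv n i)")
      case EQ
      have "\<forall>j<n. lab n D2 j \<noteq> LT"
      proof (intro allI impI)
        fix j assume j: "j < n"
        from cover[OF n3 i j] show "lab n D2 j \<noteq> LT" using L2 EQ m2 by auto
      qed
      then have "lab n D2 ((i + 1) mod n) = EQ" using noLT[OF D2] n0 by simp
      then show ?thesis using m2' by simp
    next
      case GT then show ?thesis using p2 by simp
    next
      case LT
      note L2p = LT
      show ?thesis
      proof (cases "lab n D1 (pv n i)")
        case LT
        have "lab n D1 = Lc n i LT" by (rule Lc_char[OF n3 i lab_ext L1 LT m1])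
        moreover have "lab n D2 = Lc n i EQ" by (rule Lc_char[OF n3 i lab_ext L2 L2p m2])
        ultimately show ?thesis using NC by simp
      next
        case GT then show ?thesis using p1 by simp
      next
        case EQ
        have H: "lab n D2 (pv n (pv n i)) = GT \<or>
            (\<exists>k. 1 \<le> k \<and> k \<le> n - 2 \<and> lab n D2 ((pv n i + k) mod n) \<noteq> GT)"
          using n3 L2 nx_pv[OF i] idx_1[of "pv n i" n] by (intro disjI2 exI[of _ 1]) auto
        have "sched_update n D2 (xc n (pv n i)) (nx n (pv n i)) \<noteq> sched_update n D1 (xc n (pv n i)) (nx n (pv n i))"
          by (rule distB[OF n3 pvl su_sol[OF D2] su_sol[OF D1] L2p EQ H])
        then show ?thesis using xc_configs by metis
      qed
    qed
  qed
qed

lemma DIST: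
  assumes n3: "3 \<le> n" and D1: "D1 \<in> schedules n" and D2: "D2 \<in> schedules n"
    and ne: "lab n D1 \<noteq> lab n D2"
    and NC1: "\<not> (\<exists>i<n. lab n D1 = Lc n i LT \<and> lab n D2 = Lc n i EQ)"
    and NC2: "\<not> (\<exists>i<n. lab n D2 = Lc n i LT \<and> lab n D1 = Lc n i EQ)"
  shows "dynamics n D1 \<noteq> dynamics n D2"
proof -
  have n2: "2 \<le> n" using n3 by simp
  have "\<exists>x\<in>configs n. sched_update n D1 x \<noteq> sched_update n D2 x"
  proof (cases "\<exists>i<n. (lab n D1 i = GT) \<noteq> (lab n D2 i = GT)")
    case True
    then obtain i where i: "i < n" "(lab n D1 i = GT) \<noteq> (lab n D2 i = GT)" by blast
    show ?thesis
    proof (cases "lab n D1 i = GT")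
      case True
      then have "sched_update n D1 (xc n i) i \<noteq> sched_update n D2 (xc n i) i"
        using distA[OF n2 i(1) su_sol[OF D1] su_sol[OF D2] True] i(2) by simp
      then show ?thesis using xc_configs by metis
    next
      case False
      then have "sched_update n D2 (xc n i) i \<noteq> sched_update n D1 (xc n i) i"
        using distA[OF n2 i(1) su_sol[OF D2] su_sol[OF D1]] i(2) by simp
      then show ?thesis using xc_configs by metis
    qed
  next
    case False
    then have G: "\<forall>j<n. (lab n D1 j = GT) = (lab n D2 j = GT)" by simp
    obtain i where i: "i < n" "lab n D1 i \<noteq> lab n D2 i"
    proof -
      have "\<exists>i<n. lab n D1 i \<noteq> lab n D2 i"
      proof (rule ccontr)
        assume "\<not> ?thesis"
        then have "lab n D1 = lab n D2"
          using extensionalityI[OF lab_ext lab_ext, of n D1 D2] by auto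
        then show False using ne by simp
      qed
      then show ?thesis using that by blast
    qed
    have ng: "lab n D1 i \<noteq> GT" "lab n D2 i \<noteq> GT" using G i by auto
    then consider "lab n D1 i = LT" "lab n D2 i = EQ" | "lab n D1 i = EQ" "lab n D2 i = LT"
      using i(2) by (cases "lab n D1 i"; cases "lab n D2 i") auto
    then show ?thesis
    proof cases
      case 1
      show ?thesis by (rule distB_sched[OF n3 i(1) D1 D2 1 G]) (use NC1 i in blast)
    next
      case 2
      have G': "\<forall>j<n. (lab n D2 j = GT) = (lab n D1 j = GT)" using G by simp
      have "\<exists>x\<in>configs n. sched_update n D2 x \<noteq> sched_update n D1 x"
        by (rule distB_sched[OF n3 i(1) D2 D1 2(2) 2(1) G']) (use NC2 i in blast)
      then show ?thesis by metis
    qed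
  qed
  then show ?thesis using dyn_eq_iff by metis
qed


definition sched_of :: "nat \<Rightarrow> (nat \<Rightarrow> nat) \<Rightarrow> nat set list" where
  "sched_of n t = map (\<lambda>v. {i. i < n \<and> t i = v}) (sorted_list_of_set (t ` {0..<n}))"

lemma sched_of_props:
  fixes t :: "nat \<Rightarrow> nat"
  shows "sched_of n t \<in> schedules n \<and>
    (\<forall>i<n. \<forall>j<n. cmp (pos (sched_of n t) i) (pos (sched_of n t) j) = cmp (t i) (t j))"
proof -
  let ?vs = "sorted_list_of_set (t ` {0..<n})"
  let ?D = "sched_of n t"
  have fin: "finite (t ` {0..<n})" by simp
  have setvs: "set ?vs = t ` {0..<n}" using fin by simp
  have dist: "distinct ?vs" by simp
  have srt: "sorted_wrt (<) ?vs" by simp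
  have len: "length ?D = length ?vs" by (simp add: sched_of_def)
  have nth: "?D ! k = {i. i < n \<and> t i = ?vs ! k}" if "k < length ?vs" for k
    using that by (simp add: sched_of_def)
  have S: "?D \<in> schedules n"
    unfolding schedules_def
  proof (intro CollectI conjI allI impI)
    show "\<forall>B\<in>set ?D. B \<noteq> {}"
    proof
      fix B assume "B \<in> set ?D"
      then obtain v where v: "v \<in> set ?vs" "B = {i. i < n \<and> t i = v}" by (auto simp: sched_of_def)
      then obtain i where "i < n" "t i = v" using setvs by auto
      then show "B \<noteq> {}" using v by auto
    qed
  next
    fix a b assume ab: "a < b \<and> b < length ?D"
    then have "?vs ! a \<noteq> ?vs ! b" using dist len by (simp add: nth_eq_iff_index_eq)
    then show "?D ! a \<inter> ?D ! b = {}" using nth ab len by auto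
  next
    show "\<Union> (set ?D) = {0..<n}"
    proof
      show "\<Union> (set ?D) \<subseteq> {0..<n}" by (auto simp: sched_of_def)
      show "{0..<n} \<subseteq> \<Union> (set ?D)"
      proof
        fix i assume "i \<in> {0..<n}"
        then have "t i \<in> set ?vs" using setvs by auto
        then show "i \<in> \<Union> (set ?D)" using \<open>i \<in> {0..<n}\<close> by (auto simp: sched_of_def)
      qed
    qed
  qed
  have pv_: "pos ?D i < length ?vs \<and> ?vs ! pos ?D i = t i" if "i < n" for i
    using sched_pos[OF S that] nth len by auto
  have ord: "(pos ?D i < pos ?D j) = (t i < t j)" if "i < n" "j < n" for i j
  proof
    assume "pos ?D i < pos ?D j"
    then show "t i < t j" using sorted_wrt_nth_less[OF srt] pv_[OF that(1)] pv_[OF that(2)] by metis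
  next
    assume a: "t i < t j"
    show "pos ?D i < pos ?D j"
    proof (rule ccontr)
      assume "\<not> pos ?D i < pos ?D j"
      then have "pos ?D j < pos ?D i \<or> pos ?D j = pos ?D i" by arith
      then show False using sorted_wrt_nth_less[OF srt] pv_[OF that(1)] pv_[OF that(2)] a
        by (metis less_asym less_irrefl)
    qed
  qed
  have eq: "(pos ?D i = pos ?D j) = (t i = t j)" if "i < n" "j < n" for i j
  proof
    assume "pos ?D i = pos ?D j"
    then show "t i = t j" using ord[OF that] ord[OF that(2,1)] by (metis linorder_neqE_nat less_irrefl)
  next
    assume "t i = t j"
    then show "pos ?D i = pos ?D j" using ord[OF that] ord[OF that(2,1)] by (metis linorder_neqE_nat less_irrefl)
  qed
  show ?thesis using S ord eq by (simp add: cmp_def)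
qed

lemma all_EQ_real:
  assumes n0: "0 < n" and E: "L \<in> extensional {0..<n}" and A: "\<forall>i<n. L i = EQ"
  shows "\<exists>D\<in>schedules n. lab n D = L"
proof -
  let ?D = "[{0..<n}]"
  have S: "?D \<in> schedules n" using n0 by (auto simp: schedules_def)
  have p: "pos ?D i = 0" if "i < n" for i using sched_pos[OF S that] by simp
  have "lab n ?D = L"
  proof (rule ext)
    fix i show "lab n ?D i = L i"
      using E A p nx_lt[OF n0] by (cases "i < n") (auto simp: lab_def cmp_def extensional_def)
  qed
  then show ?thesis using S by blast
qed

fun upf :: "nat \<Rightarrow> (nat \<Rightarrow> lbl) \<Rightarrow> nat \<Rightarrow> nat \<Rightarrow> nat" where
  "upf n L 0 i = 0"
| "upf n L (Suc k) i = (case L (pv n i) of LT \<Rightarrow> Suc (upf n L k (pv n i)) | EQ \<Rightarrow> upf n L k (pv n i) | GT \<Rightarrow> 0)"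

fun dnf :: "nat \<Rightarrow> (nat \<Rightarrow> lbl) \<Rightarrow> nat \<Rightarrow> nat \<Rightarrow> nat" where
  "dnf n L 0 i = 0"
| "dnf n L (Suc k) i = (case L i of GT \<Rightarrow> Suc (dnf n L k (nx n i)) | EQ \<Rightarrow> dnf n L k (nx n i) | LT \<Rightarrow> 0)"

lemma upf_stab:
  "(\<exists>l<k. L ((pv n ^^ Suc l) i) = GT) \<Longrightarrow> k \<le> k' \<Longrightarrow> upf n L k' i = upf n L k i"
proof (induction k arbitrary: i k')
  case 0 then show ?case by simp
next
  case (Suc k)
  then obtain k'' where k': "k' = Suc k''" "k \<le> k''" by (metis Suc_le_D Suc_le_mono)
  show ?case
  proof (cases "L (pv n i) = GT")
    case True then show ?thesis using k' by simp
  next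
    case False
    then obtain l where l: "l < Suc k" "L ((pv n ^^ Suc l) i) = GT" using Suc.prems by blast
    have "l \<noteq> 0"
    proof
      assume "l = 0" then show False using False l by simp
    qed
    then obtain l' where l': "l = Suc l'" by (metis not0_implies_Suc)
    have "L ((pv n ^^ Suc l') (pv n i)) = GT" using l l' by (simp only: funpow_Suc_right comp_def)
    then have "upf n L k'' (pv n i) = upf n L k (pv n i)" using Suc.IH[of "pv n i" k''] l l' k' by auto
    then show ?thesis using k' by (cases "L (pv n i)") auto
  qed
qed

lemma dnf_stab:
  "(\<exists>l<k. L ((nx n ^^ l) i) = LT) \<Longrightarrow> k \<le> k' \<Longrightarrow> dnf n L k' i = dnf n L k i"
proof (induction k arbitrary: i k')
  case 0 then show ?case by simp
next
  case (Suc k)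
  then obtain k'' where k': "k' = Suc k''" "k \<le> k''" by (metis Suc_le_D Suc_le_mono)
  show ?case
  proof (cases "L i = LT")
    case True then show ?thesis using k' by simp
  next
    case False
    then obtain l where l: "l < Suc k" "L ((nx n ^^ l) i) = LT" using Suc.prems by blast
    have "l \<noteq> 0"
    proof
      assume "l = 0" then show False using False l by simp
    qed
    then obtain l' where l': "l = Suc l'" by (metis not0_implies_Suc)
    have "L ((nx n ^^ l') (nx n i)) = LT" using l l' by (simp only: funpow_Suc_right comp_def)
    then have "dnf n L k'' (nx n i) = dnf n L k (nx n i)" using Suc.IH[of "nx n i" k''] l l' k' by auto
    then show ?thesis using k' by (cases "L i") auto
  qed
qed

lemma pv_pow: "0 < n \<Longrightarrow> (pv n ^^ m) ((g + m) mod n) = g mod n"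
proof (induction m)
  case 0 then show ?case by simp
next
  case (Suc m)
  have "(pv n ^^ Suc m) ((g + Suc m) mod n) = (pv n ^^ m) (pv n ((g + Suc m) mod n))"
    by (simp only: funpow_Suc_right comp_def)
  also have "pv n ((g + Suc m) mod n) = (g + m) mod n" using idx_pv[OF Suc.prems] .
  finally show ?case using Suc by simp
qed

lemma nx_pow: "0 < n \<Longrightarrow> (nx n ^^ m) i = (i + m) mod n \<or> \<not> i < n"
proof (induction m)
  case 0 then show ?case by (cases "i < n") auto
next
  case (Suc m)
  then show ?case using idx_nx[OF Suc.prems, of i m] by auto
qed


lemma mixed_real:
  assumes n0: "0 < n" and E: "L \<in> extensional {0..<n}"
    and hLT: "\<exists>g<n. L g = LT" and hGT: "\<exists>g<n. L g = GT"
  shows "\<exists>D\<in>schedules n. lab n D = L"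
proof -
  define U where "U = (\<lambda>i. upf n L n i)"
  define Dn where "Dn = (\<lambda>i. dnf n L n i)"
  define t where "t = (\<lambda>i. U i + Dn i)"
  obtain m0 where nS: "n = Suc m0" using n0 by (metis Suc_pred)
  have eGT: "\<exists>l<n - 1. L ((pv n ^^ Suc l) i) = GT" if hi: "i < n" and hn: "L i \<noteq> GT" for i
  proof -
    obtain g where g: "g < n" "L g = GT" using hGT by blast
    obtain m where m: "m < n" "(g + m) mod n = i" using idx_surj[OF g(1) hi] by blast
    have "m \<noteq> 0"
    proof
      assume "m = 0" then show False using m g hn by simp
    qed
    then have "Suc (m - 1) = m" by simp
    moreover have "(pv n ^^ m) i = g" using pv_pow[OF n0, of m g] m g by simp
    ultimately show ?thesis using g m by (intro exI[of _ "m - 1"]) auto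
  qed
  have eLT: "\<exists>l<n - 1. L ((nx n ^^ l) (nx n i)) = LT" if hi: "i < n" and hn: "L i \<noteq> LT" for i
  proof -
    obtain g where g: "g < n" "L g = LT" using hLT by blast
    obtain m where m: "m < n" "(i + m) mod n = g" using idx_surj[OF hi g(1)] by blast
    have "m \<noteq> 0"
    proof
      assume "m = 0" then show False using m g hi hn by simp
    qed
    have "(nx n ^^ (m - 1)) (nx n i) = (nx n i + (m - 1)) mod n"
      using nx_pow[OF n0, of "m - 1" "nx n i"] nx_lt[OF n0] by auto
    also have "\<dots> = (i + 1 + (m - 1)) mod n" by (simp add: nx_def mod_add_left_eq)
    also have "i + 1 + (m - 1) = i + m" using \<open>m \<noteq> 0\<close> by simp
    finally have "(nx n ^^ (m - 1)) (nx n i) = g" using m by simp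
    then show ?thesis using g m \<open>m \<noteq> 0\<close> by (intro exI[of _ "m - 1"]) auto
  qed
  have Unx: "U (nx n i) = (case L i of LT \<Rightarrow> Suc (upf n L (n - 1) i) | EQ \<Rightarrow> upf n L (n - 1) i | GT \<Rightarrow> 0)"
    if "i < n" for i
    using pv_nx[OF that[unfolded nS]] unfolding U_def nS by (simp split: lbl.split)
  have Dni: "Dn i = (case L i of GT \<Rightarrow> Suc (dnf n L (n - 1) (nx n i)) | EQ \<Rightarrow> dnf n L (n - 1) (nx n i) | LT \<Rightarrow> 0)"
    for i unfolding Dn_def nS by (simp split: lbl.split)
  have Us: "upf n L (n - 1) i = U i" if "i < n" "L i \<noteq> GT" for i
    unfolding U_def using upf_stab[OF eGT[OF that], of n] by simp
  have Ds: "dnf n L (n - 1) (nx n i) = Dn (nx n i)" if "i < n" "L i \<noteq> LT" for i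
    unfolding Dn_def using dnf_stab[OF eLT[OF that], of n] by simp
  have key: "cmp (t i) (t (nx n i)) = L i" if "i < n" for i
  proof (cases "L i")
    case LT
    then have "U (nx n i) = Suc (U i)" "Dn i = 0" using Unx[OF that] Us[OF that] Dni[of i] by auto
    then show ?thesis using LT by (simp add: t_def cmp_def)
  next
    case EQ
    then have "U (nx n i) = U i" "Dn i = Dn (nx n i)" using Unx[OF that] Us[OF that] Dni[of i] Ds[OF that] by auto
    then show ?thesis using EQ by (simp add: t_def cmp_def)
  next
    case GT
    then have "U (nx n i) = 0" "Dn i = Suc (Dn (nx n i))" using Unx[OF that] Dni[of i] Ds[OF that] by auto
    then show ?thesis using GT by (simp add: t_def cmp_def)
  qed
  have P: "sched_of n t \<in> schedules n"
    "\<forall>i<n. \<forall>j<n. cmp (pos (sched_of n t) i) (pos (sched_of n t) j) = cmp (t i) (t j)"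
    using sched_of_props[of n t] by auto
  have "lab n (sched_of n t) = L"
  proof (rule ext)
    fix i show "lab n (sched_of n t) i = L i"
    proof (cases "i < n")
      case True
      then show ?thesis using P(2) key[OF True] nx_lt[OF n0, of i] by (simp add: lab_def)
    next
      case False
      then show ?thesis using E by (simp add: lab_def extensional_def)
    qed
  qed
  then show ?thesis using P(1) by blast
qed


definition Pset :: "nat \<Rightarrow> (nat \<Rightarrow> lbl) set" where
  "Pset n = PiE {0..<n} (\<lambda>_. {LT, EQ, GT})"
definition good :: "nat \<Rightarrow> (nat \<Rightarrow> lbl) set" where
  "good n = {L \<in> Pset n. (\<forall>i<n. L i = EQ) \<or> ((\<exists>i<n. L i = LT) \<and> (\<exists>i<n. L i = GT))}"
definition Aset :: "nat \<Rightarrow> (nat \<Rightarrow> lbl) set" where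
  "Aset n = {L \<in> Pset n. (\<forall>i<n. L i \<noteq> GT) \<and> (\<exists>i<n. L i = LT)}"
definition Bset :: "nat \<Rightarrow> (nat \<Rightarrow> lbl) set" where
  "Bset n = {L \<in> Pset n. (\<forall>i<n. L i \<noteq> LT) \<and> (\<exists>i<n. L i = GT)}"
definition coll :: "nat \<Rightarrow> (nat \<Rightarrow> lbl) set" where
  "coll n = (\<lambda>i. Lc n i EQ) ` {0..<n}"

lemma card_Pset: "card (Pset n) = 3 ^ n"
  by (simp add: Pset_def card_PiE numeral_3_eq_3)

lemma finite_Pset: "finite (Pset n)"
  by (simp add: Pset_def finite_PiE)

lemma card_Aset: "card (Aset n) + 1 = 2 ^ n"
proof -
  let ?Q = "PiE {0..<n} (\<lambda>_. {LT, EQ})"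
  let ?e = "restrict (\<lambda>_. EQ) {0..<n}"
  have e: "?e \<in> ?Q" by auto
  have "Aset n = ?Q - {?e}"
  proof
    show "Aset n \<subseteq> ?Q - {?e}"
    proof
      fix L assume L: "L \<in> Aset n"
      then have "L \<in> Pset n" "\<forall>i<n. L i \<noteq> GT" "\<exists>i<n. L i = LT" by (auto simp: Aset_def)
      then show "L \<in> ?Q - {?e}"
        by (auto simp: Pset_def PiE_iff)
    qed
  next
    show "?Q - {?e} \<subseteq> Aset n"
    proof
      fix L assume L: "L \<in> ?Q - {?e}"
      then have ext: "L \<in> extensional {0..<n}" and v: "\<forall>i<n. L i \<in> {LT, EQ}" and ne: "L \<noteq> ?e"
        by (auto simp: PiE_iff)
      have "\<exists>i<n. L i \<noteq> EQ"
      proof (rule ccontr)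
        assume "\<not> ?thesis"
        then have "L = ?e" using ext by (intro extensionalityI[OF ext]) auto
        then show False using ne by simp
      qed
      then have "\<exists>i<n. L i = LT" using v by auto
      then show "L \<in> Aset n" using ext v by (auto simp: Aset_def Pset_def PiE_iff)
    qed
  qed
  moreover have "card ?Q = 2 ^ n" by (simp add: card_PiE numeral_2_eq_2)
  moreover have "finite ?Q" by (simp add: finite_PiE)
  moreover have "card ?Q > 0" using e \<open>finite ?Q\<close> card_gt_0_iff by blast
  ultimately show ?thesis using card_Diff_singleton[OF e] by simp
qed

lemma card_Bset: "card (Bset n) + 1 = 2 ^ n"
proof -
  let ?Q = "PiE {0..<n} (\<lambda>_. {GT, EQ})"
  let ?e = "restrict (\<lambda>_. EQ) {0..<n}"
  have e: "?e \<in> ?Q" by auto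
  have "Bset n = ?Q - {?e}"
  proof
    show "Bset n \<subseteq> ?Q - {?e}"
    proof
      fix L assume L: "L \<in> Bset n"
      then have "L \<in> Pset n" "\<forall>i<n. L i \<noteq> LT" "\<exists>i<n. L i = GT" by (auto simp: Bset_def)
      then show "L \<in> ?Q - {?e}"
        by (auto simp: Pset_def PiE_iff)
    qed
  next
    show "?Q - {?e} \<subseteq> Bset n"
    proof
      fix L assume L: "L \<in> ?Q - {?e}"
      then have ext: "L \<in> extensional {0..<n}" and v: "\<forall>i<n. L i \<in> {GT, EQ}" and ne: "L \<noteq> ?e"
        by (auto simp: PiE_iff)
      have "\<exists>i<n. L i \<noteq> EQ"
      proof (rule ccontr)
        assume "\<not> ?thesis"
        then have "L = ?e" using ext by (intro extensionalityI[OF ext]) auto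
        then show False using ne by simp
      qed
      then have "\<exists>i<n. L i = GT" using v by auto
      then show "L \<in> Bset n" using ext v by (auto simp: Bset_def Pset_def PiE_iff)
    qed
  qed
  moreover have "card ?Q = 2 ^ n" by (simp add: card_PiE numeral_2_eq_2)
  moreover have "finite ?Q" by (simp add: finite_PiE)
  moreover have "card ?Q > 0" using e \<open>finite ?Q\<close> card_gt_0_iff by blast
  ultimately show ?thesis using card_Diff_singleton[OF e] by simp
qed

lemma card_good: "card (Pset n) = card (good n) + card (Aset n) + card (Bset n)"
proof -
  have eq: "good n = Pset n - (Aset n \<union> Bset n)"
    by (auto simp: good_def Aset_def Bset_def) (metis lbl.exhaust)+
  have sub: "Aset n \<union> Bset n \<subseteq> Pset n" by (auto simp: Aset_def Bset_def)
  have dj: "Aset n \<inter> Bset n = {}" by (auto simp: Aset_def Bset_def)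
  have fA: "finite (Aset n)" "finite (Bset n)" using finite_Pset
    by (auto simp: Aset_def Bset_def)
  have "card (good n) = card (Pset n) - card (Aset n \<union> Bset n)"
    using eq card_Diff_subset[OF finite_subset[OF sub finite_Pset] sub] by simp
  moreover have "card (Aset n \<union> Bset n) = card (Aset n) + card (Bset n)"
    using card_Un_disjoint[OF fA dj] .
  moreover have "card (Aset n \<union> Bset n) \<le> card (Pset n)" using card_mono[OF finite_Pset sub] .
  ultimately show ?thesis by simp
qed


lemma lab_good:
  assumes D: "D \<in> schedules n"
  shows "lab n D \<in> good n"
proof -
  have P: "lab n D \<in> Pset n"
    unfolding Pset_def PiE_iff using lab_ext[of n D] by (auto intro: lbl.exhaust)
  have "(\<forall>i<n. lab n D i = EQ) \<or> ((\<exists>i<n. lab n D i = LT) \<and> (\<exists>i<n. lab n D i = GT))"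
  proof (cases "\<exists>i<n. lab n D i = LT")
    case False then show ?thesis using noLT[OF D] by auto
  next
    case True
    show ?thesis
    proof (cases "\<exists>i<n. lab n D i = GT")
      case False then show ?thesis using noGT[OF D] by auto
    next
      case True2: True
      then show ?thesis using True by blast
    qed
  qed
  then show ?thesis using P by (simp add: good_def)
qed

lemma good_real:
  assumes n0: "0 < n" and L: "L \<in> good n"
  shows "\<exists>D\<in>schedules n. lab n D = L"
proof -
  have E: "L \<in> extensional {0..<n}" using L by (simp add: good_def Pset_def PiE_iff)
  from L have "(\<forall>i<n. L i = EQ) \<or> ((\<exists>i<n. L i = LT) \<and> (\<exists>i<n. L i = GT))" by (simp add: good_def)
  then show ?thesis
  proof
    assume "\<forall>i<n. L i = EQ" then show ?thesis using all_EQ_real[OF n0 E] by blast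
  next
    assume "(\<exists>i<n. L i = LT) \<and> (\<exists>i<n. L i = GT)"
    then show ?thesis using mixed_real[OF n0 E] by blast
  qed
qed

lemma Lc_P: "Lc n i v \<in> Pset n"
  unfolding Pset_def Lc_def PiE_iff by (auto intro: lbl.exhaust)

lemma Lc_val:
  assumes n3: "3 \<le> n" and i: "i < n"
  shows "Lc n i v (pv n i) = LT" "Lc n i v i = v" "Lc n i v ((i + 1) mod n) = GT"
proof -
  have n0: "0 < n" using n3 by simp
  have pi: "pv n i \<noteq> i" using pv_neq[of n i] n3 i by simp
  show "Lc n i v (pv n i) = LT" using pv_lt[OF n0, of i] by (simp add: Lc_def)
  show "Lc n i v i = v" using pi i by (simp add: Lc_def)
  have "(i + 1) mod n \<noteq> i" "(i + 1) mod n \<noteq> pv n i" using mid_ne[OF n3 i, of 1] n3 by auto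
  then show "Lc n i v ((i + 1) mod n) = GT" using n0 by (simp add: Lc_def)
qed

lemma Lc_good:
  assumes n3: "3 \<le> n" and i: "i < n"
  shows "Lc n i v \<in> good n"
proof -
  have n0: "0 < n" using n3 by simp
  have "\<exists>j<n. Lc n i v j = LT" using Lc_val(1)[OF n3 i] pv_lt[OF n0] by blast
  moreover have "\<exists>j<n. Lc n i v j = GT" using Lc_val(3)[OF n3 i] n0 by (metis mod_less_divisor)
  ultimately show ?thesis using Lc_P by (simp add: good_def)
qed

lemma Lc_noEQ:
  assumes n3: "3 \<le> n" and i: "i < n" and j: "j < n"
  shows "Lc n i LT j \<noteq> EQ"
  using j by (simp add: Lc_def)

lemma Lc_EQ_at:
  assumes n3: "3 \<le> n" and i: "i < n" and j: "j < n" and e: "Lc n i EQ j = EQ"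
  shows "j = i"
  using j e by (simp add: Lc_def split: if_splits)

lemma card_coll:
  assumes n3: "3 \<le> n" shows "card (coll n) = n"
proof -
  have "inj_on (\<lambda>i. Lc n i EQ) {0..<n}"
  proof (rule inj_onI)
    fix i j assume i: "i \<in> {0..<n}" and j: "j \<in> {0..<n}" and e: "Lc n i EQ = Lc n j EQ"
    have "Lc n j EQ i = EQ" using e Lc_val(2)[OF n3, of i EQ] i by (metis atLeastLessThan_iff)
    then show "i = j" using Lc_EQ_at[OF n3, of j i] i j by simp
  qed
  then show ?thesis by (simp add: coll_def card_image)
qed

lemma coll_sub: "3 \<le> n \<Longrightarrow> coll n \<subseteq> good n"
  using Lc_good by (auto simp: coll_def)

lemma LcLT_good': "3 \<le> n \<Longrightarrow> i < n \<Longrightarrow> Lc n i LT \<in> good n - coll n"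
proof -
  assume n3: "3 \<le> n" and i: "i < n"
  have "Lc n i LT \<notin> coll n"
  proof
    assume "Lc n i LT \<in> coll n"
    then obtain j where j: "j < n" "Lc n i LT = Lc n j EQ" by (auto simp: coll_def)
    then have "Lc n i LT j = EQ" using Lc_val(2)[OF n3 j(1)] by simp
    then show False using Lc_noEQ[OF n3 i j(1)] by simp
  qed
  then show ?thesis using Lc_good[OF n3 i] by simp
qed

definition R :: "nat \<Rightarrow> (nat \<Rightarrow> lbl) \<Rightarrow> nat set list" where
  "R n L = (SOME D. D \<in> schedules n \<and> lab n D = L)"

lemma R_props: "0 < n \<Longrightarrow> L \<in> good n \<Longrightarrow> R n L \<in> schedules n \<and> lab n (R n L) = L"
  unfolding R_def by (rule someI_ex) (use good_real in blast)

lemma all_dyn_eq: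
  assumes n3: "3 \<le> n"
  shows "all_dynamics n = (\<lambda>L. dynamics n (R n L)) ` (good n - coll n)"
proof -
  have n0: "0 < n" using n3 by simp
  show ?thesis
  proof
    show "all_dynamics n \<subseteq> (\<lambda>L. dynamics n (R n L)) ` (good n - coll n)"
    proof
      fix d assume "d \<in> all_dynamics n"
      then obtain D where D: "D \<in> schedules n" "d = dynamics n D" by (auto simp: all_dynamics_def)
      show "d \<in> (\<lambda>L. dynamics n (R n L)) ` (good n - coll n)"
      proof (cases "lab n D \<in> coll n")
        case True
        then obtain i where i: "i < n" "lab n D = Lc n i EQ" by (auto simp: coll_def)
        have g: "Lc n i LT \<in> good n - coll n" using LcLT_good'[OF n3 i(1)] .
        then have r: "R n (Lc n i LT) \<in> schedules n" "lab n (R n (Lc n i LT)) = Lc n i LT"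
          using R_props[OF n0] by auto
        have "dynamics n (R n (Lc n i LT)) = dynamics n D"
          by (rule collision_dyn[OF n3 i(1) r(1) D(1) r(2) i(2)])
        then show ?thesis using g D(2) by (metis image_eqI)
      next
        case False
        then have g: "lab n D \<in> good n - coll n" using lab_good[OF D(1)] by simp
        then have r: "R n (lab n D) \<in> schedules n" "lab n (R n (lab n D)) = lab n D"
          using R_props[OF n0] by auto
        have "dynamics n (R n (lab n D)) = dynamics n D"
          by (rule lab_eq_dyn[OF r(1) D(1) r(2)])
        then show ?thesis using g D(2) by (metis image_eqI)
      qed
    qed
  next
    show "(\<lambda>L. dynamics n (R n L)) ` (good n - coll n) \<subseteq> all_dynamics n"
      using R_props[OF n0] by (auto simp: all_dynamics_def)
  qed
qed

lemma inj_dyn: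
  assumes n3: "3 \<le> n"
  shows "inj_on (\<lambda>L. dynamics n (R n L)) (good n - coll n)"
proof (rule inj_onI)
  have n0: "0 < n" using n3 by simp
  fix L1 L2 assume L1: "L1 \<in> good n - coll n" and L2: "L2 \<in> good n - coll n"
    and e: "dynamics n (R n L1) = dynamics n (R n L2)"
  have r1: "R n L1 \<in> schedules n" "lab n (R n L1) = L1" using R_props[OF n0] L1 by auto
  have r2: "R n L2 \<in> schedules n" "lab n (R n L2) = L2" using R_props[OF n0] L2 by auto
  show "L1 = L2"
  proof (rule ccontr)
    assume ne: "L1 \<noteq> L2"
    have nc1: "\<not> (\<exists>i<n. lab n (R n L1) = Lc n i LT \<and> lab n (R n L2) = Lc n i EQ)"
      using L2 r1 r2 by (auto simp: coll_def)
    have nc2: "\<not> (\<exists>i<n. lab n (R n L2) = Lc n i LT \<and> lab n (R n L1) = Lc n i EQ)"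
      using L1 r1 r2 by (auto simp: coll_def)
    have "dynamics n (R n L1) \<noteq> dynamics n (R n L2)"
      by (rule DIST[OF n3 r1(1) r2(1)]) (use ne r1 r2 nc1 nc2 in auto)
    then show False using e by simp
  qed
qed

lemma card_all_dyn:
  assumes n3: "3 \<le> n"
  shows "real (card (all_dynamics n)) = 3 ^ n - 2 ^ (n + 1) - real n + 2"
proof -
  have c: "card (all_dynamics n) = card (good n - coll n)"
    using all_dyn_eq[OF n3] card_image[OF inj_dyn[OF n3]] by simp
  have fg: "finite (good n)" using finite_Pset by (rule finite_subset[rotated]) (auto simp: good_def)
  have "card (good n - coll n) = card (good n) - card (coll n)"
    using card_Diff_subset[OF finite_subset[OF coll_sub[OF n3] fg] coll_sub[OF n3]] .
  moreover have "card (coll n) \<le> card (good n)" using card_mono[OF fg coll_sub[OF n3]] .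
  ultimately have g: "card (good n) = card (all_dynamics n) + n" using c card_coll[OF n3] by simp
  have e1: "real (3 ^ n) = real (card (all_dynamics n)) + real n + real (card (Aset n)) + real (card (Bset n))"
    using card_good[of n] card_Pset[of n] g by simp
  have e2: "real (card (Aset n)) + 1 = 2 ^ n" using card_Aset[of n] by (metis of_nat_1 of_nat_add of_nat_numeral of_nat_power)
  have e3: "real (card (Bset n)) + 1 = 2 ^ n" using card_Bset[of n] by (metis of_nat_1 of_nat_add of_nat_numeral of_nat_power)
  have e4: "real (3 ^ n) = 3 ^ n" by simp
  have e5: "(2::real) ^ (n + 1) = 2 * 2 ^ n" by simp
  show ?thesis using e1 e2 e3 e4 e5 by linarith
qed

theorem mainTheorem8:
  fixes n :: nat
  assumes "n \<ge> 3"
  shows "sensitivity n = (3 ^ n - 2 ^ (n + 1) - real n + 2) / (3 ^ n - 2 ^ (n + 1) + 2)"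
  using card_all_dyn[OF assms] by (simp add: sensitivity_def)

end
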